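(* Let $q>0$ be a real number. For every $n\ge2$, all zeros of the polynomial $x\mapsto S_n(x,q)$ are real, nonpositive and simple.
   Context: Permutations of $[n]=\{1,\dots,n\}$ are written in standard cycle decomposition (each cycle starts with its smallest element, cycles in increasing order of smallest elements). $\pi$ has an excedance at $i$ if $\pi(i)>i$; ${\rm exc}(\pi)$ is the number of excedances, ${\rm cyc}(\pi)$ the number of cycles. A value $x$ is a double excedance of $\pi$ if $\pi^{-1}(x)<x<\pi(x)$. A permutation $\pi$ of $[n]$ is a simsun permutation of the second kind if for every $k\in\{0,1,\dots,n\}$, deleting the $k$ largest letters from the cycle decomposition of $\pi$ yields a permutation with no double excedances; $\mathcal{SS}_n$ is the set of these, and $S_n(x,q)=\sum_{\pi\in\mathcal{SS}_n}x^{{\rm exc}(\pi)}q^{{\rm cyc}(\pi)}$. *)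

theory Defs
  imports Complex_Main "HOL-Computational_Algebra.Polynomial" "HOL-Combinatorics.Permutations"
begin

text \<open>Deleting all letters larger than m from the cycle decomposition of p:
  the resulting permutation of [m] sends i to the first element of
  p i, p (p i), ... that is at most m.\<close>
definition del_large :: "nat \<Rightarrow> (nat \<Rightarrow> nat) \<Rightarrow> nat \<Rightarrow> nat" where
  "del_large m p i =
     (if i \<in> {1..m} then (p ^^ (LEAST j. 0 < j \<and> (p ^^ j) i \<le> m)) i else i)"

definition double_exc :: "nat \<Rightarrow> (nat \<Rightarrow> nat) \<Rightarrow> nat \<Rightarrow> bool" where
  "double_exc m s x \<longleftrightarrow> x \<in> {1..m} \<and> inv_into {1..m} s x < x \<and> x < s x"

definition simsun2 :: "nat \<Rightarrow> (nat \<Rightarrow> nat) set" where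
  "simsun2 n = {p. p permutes {1..n} \<and>
     (\<forall>k\<in>{0..n}. \<not> (\<exists>x. double_exc (n - k) (del_large (n - k) p) x))}"

definition exc :: "nat \<Rightarrow> (nat \<Rightarrow> nat) \<Rightarrow> nat" where
  "exc n p = card {i \<in> {1..n}. i < p i}"

text \<open>Number of cycles (fixed points count as cycles): number of distinct orbits.\<close>
definition cyc :: "nat \<Rightarrow> (nat \<Rightarrow> nat) \<Rightarrow> nat" where
  "cyc n p = card ((\<lambda>i. {(p ^^ j) i | j. True}) ` {1..n})"

definition S_poly :: "nat \<Rightarrow> real \<Rightarrow> complex poly" where
  "S_poly n q = (\<Sum>p\<in>simsun2 n. monom (complex_of_real (q ^ cyc n p)) (exc n p))"

end

theory Submission
  imports Defs
begin


definition rem :: "nat \<Rightarrow> (nat\<Rightarrow>nat) \<Rightarrow> nat \<Rightarrow> nat" where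
 "rem n p = Transposition.transpose (Suc n) (p (Suc n)) \<circ> p"

lemma rem_apply:
  assumes "p permutes {1..Suc n}"
  shows "rem n p i = (if p i = Suc n then p (Suc n) else if i = Suc n then Suc n else p i)"
proof -
  have inj: "inj p" using assms permutes_inj by blast
  show ?thesis unfolding rem_def transpose_def using inj
    by (auto simp: inj_eq)
qed

lemma rem_permutes:
  assumes "p permutes {1..Suc n}"
  shows "rem n p permutes {1..n}"
proof -
  have "p (Suc n) \<in> {1..Suc n}" using assms permutes_in_image by fastforce
  hence "Transposition.transpose (Suc n) (p (Suc n)) permutes {1..Suc n}"
    by (intro permutes_swap_id) auto
  hence P: "rem n p permutes {1..Suc n}" unfolding rem_def using assms permutes_compose by blast
  have F: "rem n p (Suc n) = Suc n" using rem_apply[OF assms] by auto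
  have X: "rem n p x = x" if "x \<in> {1..Suc n} - {1..n}" for x
  proof -
    have "x = Suc n" using that by auto
    thus ?thesis using F by simp
  qed
  show ?thesis by (rule permutes_superset[OF P X])
qed

definition ins :: "nat \<Rightarrow> (nat\<Rightarrow>nat) \<Rightarrow> nat \<Rightarrow> nat \<Rightarrow> nat" where
 "ins n s a = (if a = 0 then s else s \<circ> Transposition.transpose a (Suc n))"

lemma ins_apply:
  assumes "s permutes {1..n}" "a \<in> {1..n}"
  shows "ins n s a i = (if i = a then Suc n else if i = Suc n then s a else s i)"
  using assms unfolding ins_def transpose_def
  by (auto simp: permutes_not_in)

lemma ins0: "ins n s 0 = s" by (simp add: ins_def)

lemma ins_permutes:
  assumes "s permutes {1..n}" "a \<in> {0..n}"
  shows "ins n s a permutes {1..Suc n}"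
proof (cases "a = 0")
  case True thus ?thesis using assms by (simp add: ins0 permutes_subset)
next
  case False
  hence "Transposition.transpose a (Suc n) permutes {1..Suc n}" using assms
    by (intro permutes_swap_id) auto
  moreover have "s permutes {1..Suc n}" using assms(1) by (rule permutes_subset) auto
  ultimately show ?thesis unfolding ins_def using False permutes_compose by auto
qed


lemma perm_fix_Suc:
  assumes "s permutes {1..n}"
  shows "s (Suc n) = Suc n"
  by (rule permutes_not_in[OF assms]) simp

lemma perm_ne_Suc:
  assumes "s permutes {1..n}" "i \<noteq> Suc n"
  shows "s i \<noteq> Suc n"
proof (cases "i \<in> {1..n}")
  case True
  then have "s i \<in> {1..n}" using permutes_in_image[OF assms(1)] by simp
  thus ?thesis by auto
next
  case False
  then have "s i = i" by (rule permutes_not_in[OF assms(1)])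
  thus ?thesis using assms(2) by simp
qed

lemma rem_ins:
  assumes "s permutes {1..n}" "a \<in> {0..n}"
  shows "rem n (ins n s a) = s"
proof
  fix i
  have P: "ins n s a permutes {1..Suc n}" by (rule ins_permutes[OF assms])
  have sn: "s (Suc n) = Suc n" by (rule perm_fix_Suc[OF assms(1)])
  show "rem n (ins n s a) i = s i"
  proof (cases "a = 0")
    case True
    show ?thesis
    proof (cases "i = Suc n")
      case True
      thus ?thesis using rem_apply[OF P, of i] sn \<open>a = 0\<close> by (simp add: ins0)
    next
      case False
      thus ?thesis using rem_apply[OF P, of i] perm_ne_Suc[OF assms(1) False] \<open>a = 0\<close> by (simp add: ins0)
    qed
  next
    case False
    hence a: "a \<in> {1..n}" using assms by auto
    have ia: "ins n s a i = (if i = a then Suc n else if i = Suc n then s a else s i)" for i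
      by (rule ins_apply[OF assms(1) a])
    have aS: "a \<noteq> Suc n" using a by auto
    have sa: "s a \<noteq> Suc n" by (rule perm_ne_Suc[OF assms(1) aS])
    consider "i = a" | "i = Suc n" | "i \<noteq> a" "i \<noteq> Suc n" by blast
    thus ?thesis
    proof cases
      case 1
      have e1: "ins n s a a = Suc n" using ia[of a] by simp
      have e2: "ins n s a (Suc n) = s a" using ia[of "Suc n"] aS by simp
      have "rem n (ins n s a) a = s a" using rem_apply[OF P, of a] e1 e2 by simp
      thus ?thesis using 1 by simp
    next
      case 2 thus ?thesis using rem_apply[OF P, of i] ia[of "Suc n"] aS sa sn by simp
    next
      case 3 thus ?thesis using rem_apply[OF P, of i] ia[of i] perm_ne_Suc[OF assms(1) 3(2)] by simp
    qed
  qed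
qed

lemma ins_rem:
  assumes "p permutes {1..Suc n}"
  defines "a \<equiv> (if p (Suc n) = Suc n then 0 else inv p (Suc n))"
  shows "a \<in> {0..n}" "ins n (rem n p) a = p"
proof -
  have R: "rem n p permutes {1..n}" by (rule rem_permutes[OF assms(1)])
  have ip: "p (inv p (Suc n)) = Suc n" by (rule permutes_inverses(1)[OF assms(1)])
  have ipin: "inv p (Suc n) \<in> {1..Suc n}"
    using permutes_in_image[OF permutes_inv[OF assms(1)], of "Suc n"] by simp
  show A: "a \<in> {0..n}"
  proof (cases "p (Suc n) = Suc n")
    case False
    hence "inv p (Suc n) \<noteq> Suc n" using ip by auto
    moreover have "1 \<le> inv p (Suc n)" "inv p (Suc n) \<le> Suc n" using ipin by simp_all
    ultimately show ?thesis using False unfolding a_def by simp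
  qed (simp add: a_def)
  show "ins n (rem n p) a = p"
  proof
    fix i
    show "ins n (rem n p) a i = p i"
    proof (cases "p (Suc n) = Suc n")
      case True
      hence "a = 0" by (simp add: a_def)
      thus ?thesis using rem_apply[OF assms(1), of i] True by (simp add: ins0)
    next
      case False
      hence a: "a = inv p (Suc n)" "a \<in> {1..n}" using A a_def ipin by auto
      have pi: "p i = Suc n \<longleftrightarrow> i = a"
      proof
        assume "p i = Suc n"
        hence "inv p (p i) = inv p (Suc n)" by simp
        thus "i = a" using permutes_inverses(2)[OF assms(1)] a(1) by simp
      qed (use ip a(1) in simp)
      have ia: "ins n (rem n p) a i = (if i = a then Suc n else if i = Suc n then rem n p a else rem n p i)"
        by (rule ins_apply[OF R a(2)])
      have ra: "rem n p a = p (Suc n)" using rem_apply[OF assms(1), of a] ip a(1) by simp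
      have "a \<noteq> Suc n" using a(2) by auto
      consider "i = a" | "i = Suc n" | "i \<noteq> a" "i \<noteq> Suc n" by blast
      thus ?thesis
      proof cases
        case 1 thus ?thesis using ia ip a(1) by simp
      next
        case 2 thus ?thesis using ia ra \<open>a \<noteq> Suc n\<close> by simp
      next
        case 3 thus ?thesis using ia rem_apply[OF assms(1), of i] pi by simp
      qed
    qed
  qed
qed

lemma ins_Suc_iff:
  assumes "s permutes {1..n}" "a \<in> {0..n}"
  shows "ins n s a i = Suc n \<longleftrightarrow> (a \<noteq> 0 \<and> i = a) \<or> (a = 0 \<and> i = Suc n)"
proof (cases "a = 0")
  case True
  have "s i = Suc n \<longleftrightarrow> i = Suc n"
    using perm_ne_Suc[OF assms(1), of i] perm_fix_Suc[OF assms(1)] by auto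
  thus ?thesis using True by (simp add: ins0)
next
  case False
  hence a: "a \<in> {1..n}" using assms by auto
  have ia: "ins n s a i = (if i = a then Suc n else if i = Suc n then s a else s i)"
    by (rule ins_apply[OF assms(1) a])
  have "a \<noteq> Suc n" using a by auto
  hence "s a \<noteq> Suc n" by (rule perm_ne_Suc[OF assms(1)])
  moreover have "s i \<noteq> Suc n" if "i \<noteq> Suc n" by (rule perm_ne_Suc[OF assms(1) that])
  ultimately show ?thesis using ia False by auto
qed

lemma ins_inj:
  assumes "s permutes {1..n}" "a \<in> {0..n}" "s' permutes {1..n}" "a' \<in> {0..n}"
    and eq: "ins n s a = ins n s' a'"
  shows "s = s'" "a = a'"
proof -
  show "s = s'" using rem_ins[OF assms(1,2)] rem_ins[OF assms(3,4)] eq by metis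
  have "ins n s a a' = Suc n \<longleftrightarrow> ins n s' a' a' = Suc n"
       "ins n s a a = Suc n \<longleftrightarrow> ins n s' a' a = Suc n" using eq by simp_all
  thus "a = a'"
    using ins_Suc_iff[OF assms(1,2)] ins_Suc_iff[OF assms(3,4)] assms(2,4) by auto
qed



lemma funpow_Suc_app: "(f ^^ Suc j) x = (f ^^ j) (f x)"
  by (simp only: funpow_Suc_right comp_def)

lemma del_large_out: "i \<notin> {1..m} \<Longrightarrow> del_large m p i = i"
  unfolding del_large_def by (rule if_not_P)

lemma del_large_in: "i \<in> {1..m} \<Longrightarrow> del_large m p i = (p ^^ (LEAST j. 0 < j \<and> (p ^^ j) i \<le> m)) i"
  unfolding del_large_def by (rule if_P)

lemma first_hit:
  assumes "0 < j" "(f ^^ j) i \<le> (m::nat)" "\<forall>l. 0 < l \<and> l < j \<longrightarrow> m < (f ^^ l) i"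
  shows "(LEAST j. 0 < j \<and> (f ^^ j) i \<le> m) = j"
proof (rule Least_equality)
  show "0 < j \<and> (f ^^ j) i \<le> m" using assms by simp
  fix y assume "0 < y \<and> (f ^^ y) i \<le> m"
  thus "j \<le> y" using assms(3) by (meson leD leI)
qed

lemma perm_return:
  assumes "p permutes {1..(N::nat)}"
  obtains j where "0 < j" "(p ^^ j) i = i"
proof -
  have "permutation p" by (rule permutes_imp_permutation[OF _ assms]) simp
  from permutation_self[OF this, of i] that show thesis by blast
qed

lemma del_large_char:
  assumes "p permutes {1..N}" "i \<in> {1..m}"
  obtains j where "0 < j" "(p ^^ j) i \<le> m" "\<forall>l. 0 < l \<and> l < j \<longrightarrow> m < (p ^^ l) i"
     "del_large m p i = (p ^^ j) i"
proof -
  obtain k where k: "0 < k" "(p ^^ k) i = i" by (rule perm_return[OF assms(1)])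
  hence ex: "\<exists>j. 0 < j \<and> (p ^^ j) i \<le> m" using assms(2) by auto
  define J where "J = (LEAST j. 0 < j \<and> (p ^^ j) i \<le> m)"
  have J: "0 < J \<and> (p ^^ J) i \<le> m" unfolding J_def by (rule LeastI_ex[OF ex])
  have L: "\<forall>l. 0 < l \<and> l < J \<longrightarrow> m < (p ^^ l) i"
  proof (intro allI impI)
    fix l assume l: "0 < l \<and> l < J"
    hence "\<not> (0 < l \<and> (p ^^ l) i \<le> m)" unfolding J_def by (intro not_less_Least) simp
    thus "m < (p ^^ l) i" using l by simp
  qed
  have "del_large m p i = (p ^^ J) i" using del_large_in[OF assms(2)] unfolding J_def by simp
  thus thesis using that J L by blast
qed

lemma del_large_id:
  assumes "p permutes {1..N}"
  shows "del_large N p = p"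
proof
  fix i show "del_large N p i = p i"
  proof (cases "i \<in> {1..N}")
    case True
    have "p i \<in> {1..N}" using permutes_in_image[OF assms] True by simp
    hence "(LEAST j. 0 < j \<and> (p ^^ j) i \<le> N) = 1" by (intro first_hit) auto
    thus ?thesis using del_large_in[OF True] by simp
  next
    case False thus ?thesis using del_large_out[OF False] permutes_not_in[OF assms False] by simp
  qed
qed

lemma rem_in:
  assumes "p permutes {1..Suc n}" "i \<in> {1..n}"
  shows "rem n p i \<in> {1..n}"
  using permutes_in_image[OF rem_permutes[OF assms(1)]] assms(2) by simp

lemma transfer_step:
  assumes "p permutes {1..Suc n}" "m \<le> n"
  shows "i \<in> {1..n} \<Longrightarrow> \<forall>l. 0 < l \<and> l \<le> j \<longrightarrow> m < (rem n p ^^ l) i \<Longrightarrow>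
    \<exists>j'>0. (p ^^ j') i = (rem n p ^^ Suc j) i \<and> (\<forall>l. 0 < l \<and> l < j' \<longrightarrow> m < (p ^^ l) i)"
proof (induction j arbitrary: i)
  case 0
  show ?case
  proof (cases "p i = Suc n")
    case False
    hence "rem n p i = p i" using rem_apply[OF assms(1), of i] 0(1) by auto
    thus ?thesis by (intro exI[of _ 1]) simp
  next
    case True
    hence "rem n p i = p (p i)" using rem_apply[OF assms(1), of i] by auto
    moreover have "\<forall>l. 0 < l \<and> l < 2 \<longrightarrow> m < (p ^^ l) i"
      using True assms(2) by (auto simp: less_2_cases_iff)
    ultimately show ?thesis by (intro exI[of _ 2]) (simp add: numeral_2_eq_2)
  qed
next
  case (Suc j)
  let ?r = "rem n p"
  have ri: "?r i \<in> {1..n}" by (rule rem_in[OF assms(1) Suc.prems(1)])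
  have "\<forall>l. 0 < l \<and> l \<le> j \<longrightarrow> m < (?r ^^ l) (?r i)"
  proof (intro allI impI)
    fix l assume "0 < l \<and> l \<le> j"
    hence "m < (?r ^^ Suc l) i" using Suc.prems(2)[rule_format, of "Suc l"] by simp
    thus "m < (?r ^^ l) (?r i)" by (simp only: funpow_Suc_app)
  qed
  from Suc.IH[OF ri this] obtain j'' where j'':
    "0 < j''" "(p ^^ j'') (?r i) = (?r ^^ Suc j) (?r i)"
    "\<forall>l. 0 < l \<and> l < j'' \<longrightarrow> m < (p ^^ l) (?r i)" by blast
  have mri: "m < ?r i" using Suc.prems(2)[rule_format, of 1] by simp
  have goal: "(?r ^^ Suc (Suc j)) i = (?r ^^ Suc j) (?r i)" by (simp only: funpow_Suc_app)
  show ?case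
  proof (cases "p i = Suc n")
    case False
    hence pi: "?r i = p i" using rem_apply[OF assms(1), of i] Suc.prems(1) by auto
    show ?thesis
    proof (intro exI[of _ "Suc j''"] conjI allI impI)
      show "0 < Suc j''" by simp
      show "(p ^^ Suc j'') i = (?r ^^ Suc (Suc j)) i"
        using j''(2) pi goal by (simp only: funpow_Suc_app)
      fix l assume l: "0 < l \<and> l < Suc j''"
      show "m < (p ^^ l) i"
      proof (cases l)
        case 0 thus ?thesis using l by simp
      next
        case (Suc l')
        show ?thesis
        proof (cases "l' = 0")
          case True thus ?thesis using Suc mri pi by simp
        next
          case False
          hence "m < (p ^^ l') (p i)" using j''(3) l Suc pi by auto
          thus ?thesis using Suc by (simp only: funpow_Suc_app)
        qed
      qed
    qed
  next
    case True
    hence pi: "?r i = p (p i)" using rem_apply[OF assms(1), of i] by auto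
    show ?thesis
    proof (intro exI[of _ "Suc (Suc j'')"] conjI allI impI)
      show "0 < Suc (Suc j'')" by simp
      show "(p ^^ Suc (Suc j'')) i = (?r ^^ Suc (Suc j)) i"
        using j''(2) pi goal by (simp only: funpow_Suc_app)
      fix l assume l: "0 < l \<and> l < Suc (Suc j'')"
      show "m < (p ^^ l) i"
      proof (cases "l = 1")
        case True thus ?thesis using \<open>p i = Suc n\<close> assms(2) by simp
      next
        case False
        then obtain l' where l': "l = Suc (Suc l')" using l
          by (metis One_nat_def gr0_implies_Suc less_numeral_extra(3) not0_implies_Suc)
        show ?thesis
        proof (cases "l' = 0")
          case True thus ?thesis using l' mri pi by (simp add: funpow_Suc_app)
        next
          case False
          hence "m < (p ^^ l') (p (p i))" using j''(3) l l' pi by auto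
          thus ?thesis using l' by (simp only: funpow_Suc_app)
        qed
      qed
    qed
  qed
qed

lemma del_large_rem:
  assumes "p permutes {1..Suc n}" "m \<le> n"
  shows "del_large m p = del_large m (rem n p)"
proof
  fix i
  show "del_large m p i = del_large m (rem n p) i"
  proof (cases "i \<in> {1..m}")
    case False thus ?thesis using del_large_out[OF False] by simp
  next
    case True
    have R: "rem n p permutes {1..n}" by (rule rem_permutes[OF assms(1)])
    obtain J where J: "0 < J" "(rem n p ^^ J) i \<le> m" "\<forall>l. 0 < l \<and> l < J \<longrightarrow> m < (rem n p ^^ l) i"
      "del_large m (rem n p) i = (rem n p ^^ J) i"
      by (rule del_large_char[OF R True])
    then obtain j where j: "J = Suc j" using gr0_implies_Suc by blast
    have "i \<in> {1..n}" using True assms(2) by auto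
    moreover have "\<forall>l. 0 < l \<and> l \<le> j \<longrightarrow> m < (rem n p ^^ l) i" using J(3) j by auto
    ultimately obtain j' where j': "0 < j'" "(p ^^ j') i = (rem n p ^^ Suc j) i"
        "\<forall>l. 0 < l \<and> l < j' \<longrightarrow> m < (p ^^ l) i"
      using transfer_step[OF assms] by blast
    have "(LEAST j. 0 < j \<and> (p ^^ j) i \<le> m) = j'"
      by (rule first_hit) (use j' J(2) j in auto)
    hence "del_large m p i = (p ^^ j') i" using del_large_in[OF True] by simp
    thus ?thesis using J(4) j j'(2) by simp
  qed
qed

lemma all_minus_iff: "(\<forall>k\<in>{0..(N::nat)}. Q (N - k)) \<longleftrightarrow> (\<forall>m\<le>N. Q m)"
proof
  assume H: "\<forall>k\<in>{0..N}. Q (N - k)"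
  show "\<forall>m\<le>N. Q m"
  proof (intro allI impI)
    fix m assume "m \<le> N"
    hence "N - (N - m) = m" "N - m \<in> {0..N}" by auto
    thus "Q m" using H by metis
  qed
qed auto

lemma simsun2_Suc:
  "simsun2 (Suc n) = {p. p permutes {1..Suc n} \<and> rem n p \<in> simsun2 n \<and> \<not> (\<exists>x. double_exc (Suc n) p x)}"
proof (intro set_eqI iffI)
  fix p
  let ?Q = "\<lambda>p m. \<not> (\<exists>x. double_exc m (del_large m p) x)"
  have key: "(\<forall>m\<le>Suc n. ?Q p m) \<longleftrightarrow> (\<not> (\<exists>x. double_exc (Suc n) p x)) \<and> (\<forall>m\<le>n. ?Q (rem n p) m)"
    if P: "p permutes {1..Suc n}"
  proof -
    have "(\<forall>m\<le>Suc n. ?Q p m) \<longleftrightarrow> ?Q p (Suc n) \<and> (\<forall>m\<le>n. ?Q p m)"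
      by (auto simp: le_Suc_eq)
    also have "?Q p (Suc n) \<longleftrightarrow> \<not> (\<exists>x. double_exc (Suc n) p x)" using del_large_id[OF P] by simp
    also have "(\<forall>m\<le>n. ?Q p m) \<longleftrightarrow> (\<forall>m\<le>n. ?Q (rem n p) m)"
      using del_large_rem[OF P] by simp
    finally show ?thesis .
  qed
  {
    assume "p \<in> simsun2 (Suc n)"
    hence P: "p permutes {1..Suc n}" and C: "\<forall>m\<le>Suc n. ?Q p m"
      unfolding simsun2_def using all_minus_iff[of "Suc n" "?Q p"] by auto
    show "p \<in> {p. p permutes {1..Suc n} \<and> rem n p \<in> simsun2 n \<and> \<not> (\<exists>x. double_exc (Suc n) p x)}"
      using P key[OF P] C rem_permutes[OF P] all_minus_iff[of n "?Q (rem n p)"]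
      unfolding simsun2_def by auto
  next
    assume "p \<in> {p. p permutes {1..Suc n} \<and> rem n p \<in> simsun2 n \<and> \<not> (\<exists>x. double_exc (Suc n) p x)}"
    hence P: "p permutes {1..Suc n}" and R: "rem n p \<in> simsun2 n" and D: "\<not> (\<exists>x. double_exc (Suc n) p x)"
      by auto
    have "\<forall>m\<le>n. ?Q (rem n p) m" using R all_minus_iff[of n "?Q (rem n p)"] unfolding simsun2_def by auto
    hence "\<forall>m\<le>Suc n. ?Q p m" using key[OF P] D by auto
    thus "p \<in> simsun2 (Suc n)" using P all_minus_iff[of "Suc n" "?Q p"] unfolding simsun2_def by auto
  }
qed



lemma inv_into_perm:
  assumes "f permutes S" "y \<in> S" "f y = x"
  shows "inv_into S f x = y"
proof -
  have "inj_on f S" by (rule permutes_inj_on[OF assms(1)])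
  thus ?thesis using inv_into_f_f assms(2,3) by metis
qed

lemma inv_into_perm_props:
  assumes "f permutes S" "x \<in> S"
  shows "inv_into S f x \<in> S" "f (inv_into S f x) = x"
proof -
  have "f ` S = S" by (rule permutes_image[OF assms(1)])
  hence xi: "x \<in> f ` S" using assms(2) by simp
  show "inv_into S f x \<in> S" by (rule inv_into_into[OF xi])
  show "f (inv_into S f x) = x" by (rule f_inv_into_f[OF xi])
qed

lemma dexc_ins:
  assumes S: "s permutes {1..n}" and a: "a \<in> {0..n}" and nd: "\<not> (\<exists>x. double_exc n s x)"
  shows "(\<exists>x. double_exc (Suc n) (ins n s a) x) \<longleftrightarrow> (a \<noteq> 0 \<and> inv_into {1..n} s a < a)"
proof (cases "a = 0")
  case True
  have T: "s permutes {1..Suc n}" using S by (rule permutes_subset) auto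
  have "\<not> double_exc (Suc n) s x" for x
  proof
    assume D: "double_exc (Suc n) s x"
    hence x: "x \<in> {1..Suc n}" "inv_into {1..Suc n} s x < x" "x < s x" unfolding double_exc_def by auto
    show False
    proof (cases "x = Suc n")
      case True thus False using x(3) perm_fix_Suc[OF S] by simp
    next
      case False
      hence xn: "x \<in> {1..n}" using x(1) by auto
      have y: "inv_into {1..n} s x \<in> {1..n}" "s (inv_into {1..n} s x) = x"
        by (rule inv_into_perm_props[OF S xn])+
      have "inv_into {1..Suc n} s x = inv_into {1..n} s x"
        by (rule inv_into_perm[OF T]) (use y in auto)
      hence "double_exc n s x" unfolding double_exc_def using x xn by simp
      thus False using nd by blast
    qed
  qed
  thus ?thesis using True by (simp add: ins0)
next
  case False
  hence a1: "a \<in> {1..n}" using a by auto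
  let ?t = "ins n s a"
  let ?is = "inv_into {1..n} s"
  have T: "?t permutes {1..Suc n}" by (rule ins_permutes[OF S a])
  have ti: "?t i = (if i = a then Suc n else if i = Suc n then s a else s i)" for i
    by (rule ins_apply[OF S a1])
  have sa: "s a \<in> {1..n}" using permutes_in_image[OF S] a1 by simp
  have ya: "?is a \<in> {1..n}" "s (?is a) = a" by (rule inv_into_perm_props[OF S a1])+
  have inv_a: "inv_into {1..Suc n} ?t a = ?is a" if "s a \<noteq> a"
  proof (rule inv_into_perm[OF T])
    show "?is a \<in> {1..Suc n}" using ya by auto
    have "?is a \<noteq> a" using ya that by metis
    moreover have "?is a \<noteq> Suc n" using ya by auto
    ultimately show "?t (?is a) = a" using ti ya by simp
  qed
  show ?thesis
  proof
    assume "\<exists>x. double_exc (Suc n) ?t x"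
    then obtain x where x: "x \<in> {1..Suc n}" "inv_into {1..Suc n} ?t x < x" "x < ?t x"
      unfolding double_exc_def by auto
    consider "x = Suc n" | "x = a" | "x \<noteq> a" "x = s a" | "x \<noteq> a" "x \<noteq> s a" "x \<noteq> Suc n" by blast
    thus "a \<noteq> 0 \<and> ?is a < a"
    proof cases
      case 1 thus ?thesis using x(3) ti[of "Suc n"] sa a1 by auto
    next
      case 2
      show ?thesis
      proof (cases "s a = a")
        case True
        have "inv_into {1..Suc n} ?t a = Suc n"
          by (rule inv_into_perm[OF T]) (use ti True a1 in auto)
        thus ?thesis using x(2) 2 a1 by simp
      next
        case False
        thus ?thesis using inv_a x(2) 2 \<open>a \<noteq> 0\<close> by simp
      qed
    next
      case 3
      have "inv_into {1..Suc n} ?t x = Suc n"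
        by (rule inv_into_perm[OF T]) (use ti 3 a1 in auto)
      thus ?thesis using x(1,2) by simp
    next
      case 4
      hence xn: "x \<in> {1..n}" using x(1) by auto
      have y: "?is x \<in> {1..n}" "s (?is x) = x" by (rule inv_into_perm_props[OF S xn])+
      have "?is x \<noteq> a" using y 4 by metis
      hence "inv_into {1..Suc n} ?t x = ?is x"
        by (intro inv_into_perm[OF T]) (use y ti in auto)
      moreover have "?t x = s x" using ti 4 by simp
      ultimately have "double_exc n s x" unfolding double_exc_def using x xn by simp
      thus ?thesis using nd by blast
    qed
  next
    assume H: "a \<noteq> 0 \<and> ?is a < a"
    have "s a \<noteq> a"
    proof
      assume "s a = a"
      hence "?is a = a" using inv_into_perm[OF S a1] by simp
      thus False using H by simp
    qed
    hence "double_exc (Suc n) ?t a" unfolding double_exc_def using inv_a H a1 ti by simp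
    thus "\<exists>x. double_exc (Suc n) ?t x" by blast
  qed
qed

lemma exc_ins:
  assumes S: "s permutes {1..n}" and a: "a \<in> {0..n}"
  shows "exc (Suc n) (ins n s a) = exc n s + (if a \<noteq> 0 \<and> \<not> a < s a then 1 else 0)"
proof (cases "a = 0")
  case True
  have fx: "s (Suc n) = Suc n" by (rule perm_fix_Suc[OF S])
  have "{i \<in> {1..Suc n}. i < s i} = {i \<in> {1..n}. i < s i}"
  proof (intro set_eqI iffI)
    fix i assume i: "i \<in> {i \<in> {1..Suc n}. i < s i}"
    hence "i \<noteq> Suc n" using fx by auto
    thus "i \<in> {i \<in> {1..n}. i < s i}" using i by simp
  qed simp
  thus ?thesis using True unfolding exc_def by (simp add: ins0)
next
  case False
  hence a1: "a \<in> {1..n}" using a by auto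
  have ti: "ins n s a i = (if i = a then Suc n else if i = Suc n then s a else s i)" for i
    by (rule ins_apply[OF S a1])
  have sa: "s a \<in> {1..n}" using permutes_in_image[OF S] a1 by simp
  have E: "{i \<in> {1..Suc n}. i < ins n s a i} = insert a {i \<in> {1..n}. i < s i}"
  proof (intro set_eqI iffI)
    fix i assume "i \<in> {i \<in> {1..Suc n}. i < ins n s a i}"
    hence i: "i \<in> {1..Suc n}" "i < ins n s a i" by auto
    show "i \<in> insert a {i \<in> {1..n}. i < s i}"
    proof (cases "i = a")
      case False
      have "i \<noteq> Suc n"
      proof
        assume "i = Suc n"
        hence "ins n s a i = s a" using ti a1 by simp
        thus False using i(2) sa \<open>i = Suc n\<close> by simp
      qed
      hence "i \<in> {1..n}" "i < s i" using i ti False by simp_all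
      thus ?thesis by simp
    qed simp
  next
    fix i assume "i \<in> insert a {i \<in> {1..n}. i < s i}"
    thus "i \<in> {i \<in> {1..Suc n}. i < ins n s a i}"
    proof
      assume "i = a" thus ?thesis using ti a1 by simp
    next
      assume i: "i \<in> {i \<in> {1..n}. i < s i}"
      show ?thesis
      proof (cases "i = a")
        case False thus ?thesis using ti i by simp
      qed (use ti a1 in simp)
    qed
  qed
  have fin: "finite {i \<in> {1..n}. i < s i}" by simp
  show ?thesis
  proof (cases "a < s a")
    case True
    hence "a \<in> {i \<in> {1..n}. i < s i}" using a1 by simp
    hence "insert a {i \<in> {1..n}. i < s i} = {i \<in> {1..n}. i < s i}" by (rule insert_absorb)
    thus ?thesis unfolding exc_def E using True by simp
  next
    case F: False
    hence "a \<notin> {i \<in> {1..n}. i < s i}" by simp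
    thus ?thesis unfolding exc_def E using F False card_insert_disjoint[OF fin] by simp
  qed
qed

lemma peaks_card:
  assumes S: "s permutes {1..n}"
  shows "card {a \<in> {1..n}. inv_into {1..n} s a < a} = exc n s"
proof -
  let ?A = "{i \<in> {1..n}. i < s i}" and ?B = "{a \<in> {1..n}. inv_into {1..n} s a < a}"
  have "bij_betw s ?A ?B"
  proof (rule bij_betw_imageI)
    show "inj_on s ?A" using permutes_inj_on[OF S] inj_on_subset by blast
    show "s ` ?A = ?B"
    proof (intro set_eqI iffI)
      fix b assume "b \<in> s ` ?A"
      then obtain i where i: "i \<in> {1..n}" "i < s i" "b = s i" by auto
      have "s i \<in> {1..n}" using permutes_in_image[OF S] i(1) by simp
      moreover have "inv_into {1..n} s (s i) = i" by (rule inv_into_perm[OF S i(1)]) simp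
      ultimately show "b \<in> ?B" using i by simp
    next
      fix b assume b: "b \<in> ?B"
      hence bn: "b \<in> {1..n}" by simp
      have y: "inv_into {1..n} s b \<in> {1..n}" "s (inv_into {1..n} s b) = b"
        by (rule inv_into_perm_props[OF S bn])+
      show "b \<in> s ` ?A"
        using y b by (intro image_eqI[of _ _ "inv_into {1..n} s b"]) auto
    qed
  qed
  hence "card ?A = card ?B" by (rule bij_betw_same_card)
  thus ?thesis unfolding exc_def by simp
qed



definition orb :: "(nat \<Rightarrow> nat) \<Rightarrow> nat \<Rightarrow> nat set" where
  "orb f i = {(f ^^ j) i | j. True}"

lemma cyc_orb: "cyc n p = card (orb p ` {1..n})"
  unfolding cyc_def orb_def by simp

lemma orb_self: "i \<in> orb f i"
  unfolding orb_def by (auto intro: exI[of _ 0])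

lemma orb_sub:
  assumes "y \<in> orb f x" shows "orb f y \<subseteq> orb f x"
proof
  fix z assume "z \<in> orb f y"
  then obtain j where z: "z = (f ^^ j) y" unfolding orb_def by auto
  obtain k where y: "y = (f ^^ k) x" using assms unfolding orb_def by auto
  have "z = (f ^^ (j + k)) x" using z y by (simp add: funpow_add)
  thus "z \<in> orb f x" unfolding orb_def by blast
qed

lemma funpow_mult_fix:
  assumes "(f ^^ N) x = x" shows "(f ^^ (N * k)) x = x"
proof (induction k)
  case (Suc k)
  have "(f ^^ (N * Suc k)) x = (f ^^ N) ((f ^^ (N * k)) x)"
    by (simp add: funpow_add mult.commute[of N])
  thus ?case using Suc assms by simp
qed simp

lemma orb_eq:
  assumes P: "p permutes {1..(M::nat)}" and y: "y \<in> orb p x"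
  shows "orb p y = orb p x"
proof
  show "orb p y \<subseteq> orb p x" by (rule orb_sub[OF y])
  obtain k where k: "y = (p ^^ k) x" using y unfolding orb_def by auto
  obtain N where N: "0 < N" "(p ^^ N) x = x" by (rule perm_return[OF P])
  have "(p ^^ (N * k)) x = x" by (rule funpow_mult_fix[OF N(2)])
  moreover have "N * k = (N * k - k) + k" using N(1) by simp
  ultimately have "(p ^^ (N * k - k)) y = x" using k by (metis funpow_add comp_apply)
  hence "x \<in> orb p y" unfolding orb_def by blast
  thus "orb p x \<subseteq> orb p y" by (rule orb_sub)
qed

lemma rem_funpow_ex:
  assumes P: "p permutes {1..Suc n}"
  shows "\<exists>j'. (rem n p ^^ j) i = (p ^^ j') i"
proof (induction j arbitrary: i)
  case 0 show ?case by (intro exI[of _ 0]) simp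
next
  case (Suc j)
  obtain j'' where j'': "(rem n p ^^ j) (rem n p i) = (p ^^ j'') (rem n p i)" using Suc by blast
  have "\<exists>k. rem n p i = (p ^^ k) i"
  proof (cases "p i = Suc n")
    case True
    hence "rem n p i = (p ^^ 2) i" using rem_apply[OF P, of i] by (simp add: numeral_2_eq_2)
    thus ?thesis by blast
  next
    case False
    show ?thesis
    proof (cases "i = Suc n")
      case True
      hence "rem n p i = (p ^^ 0) i" using rem_apply[OF P, of i] False by simp
      thus ?thesis by blast
    next
      case F2: False
      hence "rem n p i = (p ^^ 1) i" using rem_apply[OF P, of i] False by simp
      thus ?thesis by blast
    qed
  qed
  then obtain k where k: "rem n p i = (p ^^ k) i" by blast
  have "(rem n p ^^ Suc j) i = (p ^^ (j'' + k)) i"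
    using j'' k by (simp only: funpow_Suc_app funpow_add comp_apply)
  thus ?case by blast
qed

lemma orb_rem:
  assumes P: "p permutes {1..Suc n}" and i: "i \<in> {1..n}"
  shows "orb (rem n p) i = orb p i - {Suc n}"
proof
  let ?r = "rem n p"
  have R: "?r permutes {1..n}" by (rule rem_permutes[OF P])
  show "orb ?r i \<subseteq> orb p i - {Suc n}"
  proof
    fix z assume "z \<in> orb ?r i"
    then obtain j where z: "z = (?r ^^ j) i" unfolding orb_def by auto
    obtain j' where "(?r ^^ j) i = (p ^^ j') i" using rem_funpow_ex[OF P] by blast
    hence "z \<in> orb p i" using z unfolding orb_def by blast
    moreover have "z \<in> {1..n}" using z permutes_in_funpow_image[OF R i] by simp
    ultimately show "z \<in> orb p i - {Suc n}" by auto
  qed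
  have key: "(p ^^ t) i \<noteq> Suc n \<longrightarrow> (\<exists>j. (?r ^^ j) i = (p ^^ t) i)" for t
  proof (induction t rule: less_induct)
    case (less t)
    show ?case
    proof (cases t)
      case 0 thus ?thesis by (auto intro: exI[of _ 0])
    next
      case (Suc t')
      show ?thesis
      proof
        assume ne: "(p ^^ t) i \<noteq> Suc n"
        let ?y = "(p ^^ t') i"
        have pt: "(p ^^ t) i = p ?y" using Suc by simp
        show "\<exists>j. (?r ^^ j) i = (p ^^ t) i"
        proof (cases "?y = Suc n")
          case False
          then obtain j where j: "(?r ^^ j) i = ?y" using less Suc by blast
          have "?r ?y = p ?y" using rem_apply[OF P, of ?y] False ne pt by simp
          hence "(?r ^^ Suc j) i = (p ^^ t) i" using j pt by simp
          thus ?thesis by blast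
        next
          case True
          have "t' \<noteq> 0"
          proof
            assume "t' = 0"
            hence "i = Suc n" using True by simp
            thus False using i by simp
          qed
          then obtain t'' where t'': "t' = Suc t''" using not0_implies_Suc by blast
          let ?w = "(p ^^ t'') i"
          have pw: "p ?w = Suc n" using True t'' by simp
          have wne: "?w \<noteq> Suc n"
          proof
            assume "?w = Suc n"
            hence "p (Suc n) = Suc n" using pw by simp
            thus False using ne pt True by simp
          qed
          obtain j where j: "(?r ^^ j) i = ?w" using less.IH[of t''] Suc t'' wne by auto
          have "?r ?w = p (Suc n)" using rem_apply[OF P, of ?w] pw by simp
          hence "(?r ^^ Suc j) i = (p ^^ t) i" using j pt True by simp
          thus ?thesis by blast
        qed
      qed
    qed
  qed
  show "orb p i - {Suc n} \<subseteq> orb ?r i"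
  proof
    fix z assume "z \<in> orb p i - {Suc n}"
    then obtain t where "z = (p ^^ t) i" "z \<noteq> Suc n" unfolding orb_def by auto
    then obtain j where "(?r ^^ j) i = z" using key[of t] by auto
    thus "z \<in> orb ?r i" unfolding orb_def by auto
  qed
qed

lemma cyc_rem:
  assumes P: "p permutes {1..Suc n}" and ne: "p (Suc n) \<noteq> Suc n"
  shows "cyc (Suc n) p = cyc n (rem n p)"
proof -
  let ?a = "inv p (Suc n)"
  have ip: "p ?a = Suc n" by (rule permutes_inverses(1)[OF P])
  have ain: "?a \<in> {1..Suc n}" using permutes_in_image[OF permutes_inv[OF P], of "Suc n"] by simp
  have "?a \<noteq> Suc n" using ip ne by auto
  hence a1: "?a \<in> {1..n}" using ain by auto
  have "Suc n \<in> orb p ?a" using ip unfolding orb_def by (auto intro: exI[of _ 1])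
  hence oSn: "orb p (Suc n) = orb p ?a" by (rule orb_eq[OF P])
  have I1: "orb p ` {1..Suc n} = orb p ` {1..n}"
  proof
    show "orb p ` {1..n} \<subseteq> orb p ` {1..Suc n}" by auto
    show "orb p ` {1..Suc n} \<subseteq> orb p ` {1..n}"
    proof
      fix X assume "X \<in> orb p ` {1..Suc n}"
      then obtain i where i: "i \<in> {1..Suc n}" "X = orb p i" by auto
      show "X \<in> orb p ` {1..n}"
      proof (cases "i = Suc n")
        case True thus ?thesis using i oSn a1 by auto
      next
        case False thus ?thesis using i by auto
      qed
    qed
  qed
  have inj: "inj_on (\<lambda>X. X - {Suc n}) (orb p ` {1..n})"
  proof (rule inj_onI)
    fix X Y assume X: "X \<in> orb p ` {1..n}" and Y: "Y \<in> orb p ` {1..n}" and eq: "X - {Suc n} = Y - {Suc n}"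
    obtain i where i: "i \<in> {1..n}" "X = orb p i" using X by auto
    obtain i' where i': "i' \<in> {1..n}" "Y = orb p i'" using Y by auto
    have "i \<in> X - {Suc n}" using i orb_self[of i p] by auto
    hence "i \<in> orb p i'" using eq i' by auto
    thus "X = Y" using orb_eq[OF P] i i' by simp
  qed
  have I2: "(\<lambda>X. X - {Suc n}) ` (orb p ` {1..n}) = orb (rem n p) ` {1..n}"
  proof -
    have "(\<lambda>X. X - {Suc n}) ` (orb p ` {1..n}) = (\<lambda>i. orb p i - {Suc n}) ` {1..n}"
      by (simp add: image_image)
    also have "\<dots> = orb (rem n p) ` {1..n}"
      using orb_rem[OF P] by (intro image_cong) auto
    finally show ?thesis .
  qed
  have "cyc (Suc n) p = card (orb p ` {1..n})" unfolding cyc_orb I1 ..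
  also have "\<dots> = card ((\<lambda>X. X - {Suc n}) ` (orb p ` {1..n}))" using card_image[OF inj] by simp
  also have "\<dots> = cyc n (rem n p)" unfolding cyc_orb I2 ..
  finally show ?thesis .
qed

lemma cyc_ins:
  assumes S: "s permutes {1..n}" and a: "a \<in> {0..n}"
  shows "cyc (Suc n) (ins n s a) = cyc n s + (if a = 0 then 1 else 0)"
proof (cases "a = 0")
  case False
  have T: "ins n s a permutes {1..Suc n}" by (rule ins_permutes[OF S a])
  have "a \<noteq> Suc n" using a by simp
  hence "ins n s a (Suc n) \<noteq> Suc n" using ins_Suc_iff[OF S a, of "Suc n"] False by simp
  hence "cyc (Suc n) (ins n s a) = cyc n (rem n (ins n s a))" by (rule cyc_rem[OF T])
  thus ?thesis using rem_ins[OF S a] False by simp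
next
  case True
  have fx: "s (Suc n) = Suc n" by (rule perm_fix_Suc[OF S])
  have "(s ^^ j) (Suc n) = Suc n" for j by (induction j) (simp_all add: fx)
  hence oS: "orb s (Suc n) = {Suc n}" unfolding orb_def by auto
  have "{1..Suc n} = insert (Suc n) {1..n}" by auto
  hence "orb s ` {1..Suc n} = insert {Suc n} (orb s ` {1..n})"
    using oS by simp
  moreover have "{Suc n} \<notin> orb s ` {1..n}"
  proof
    assume "{Suc n} \<in> orb s ` {1..n}"
    then obtain i where "i \<in> {1..n}" "{Suc n} = orb s i" by auto
    hence "i \<in> {Suc n}" using orb_self[of i s] by simp
    thus False using \<open>i \<in> {1..n}\<close> by simp
  qed
  ultimately have "card (orb s ` {1..Suc n}) = Suc (card (orb s ` {1..n}))" by simp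
  thus ?thesis using True unfolding cyc_orb by (simp add: ins0)
qed



definition AL :: "nat \<Rightarrow> (nat \<Rightarrow> nat) \<Rightarrow> nat set" where
  "AL n s = insert 0 {a \<in> {1..n}. \<not> inv_into {1..n} s a < a}"

definition ia :: "nat \<Rightarrow> (nat \<Rightarrow> nat) \<Rightarrow> nat" where
  "ia n p = (if p (Suc n) = Suc n then 0 else inv p (Suc n))"

definition W :: "real \<Rightarrow> nat \<Rightarrow> (nat \<Rightarrow> nat) \<Rightarrow> complex poly" where
  "W q n p = monom (complex_of_real (q ^ cyc n p)) (exc n p)"

lemma S_poly_W: "S_poly n q = (\<Sum>p\<in>simsun2 n. W q n p)"
  unfolding S_poly_def W_def ..

lemma simsun2_perm: "p \<in> simsun2 n \<Longrightarrow> p permutes {1..n}"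
  unfolding simsun2_def by simp

lemma simsun2_nodexc:
  assumes "p \<in> simsun2 n" shows "\<not> (\<exists>x. double_exc n p x)"
proof -
  have "\<forall>k\<in>{0..n}. \<not> (\<exists>x. double_exc (n - k) (del_large (n - k) p) x)" using assms unfolding simsun2_def by blast
  hence "\<not> (\<exists>x. double_exc (n - 0) (del_large (n - 0) p) x)" by (drule_tac x=0 in bspec) simp_all
  thus ?thesis using del_large_id[OF simsun2_perm[OF assms]] by simp
qed

lemma finite_simsun2: "finite (simsun2 n)"
proof (rule finite_subset)
  show "simsun2 n \<subseteq> {p. p permutes {1..n}}" using simsun2_perm by blast
  show "finite {p. p permutes {1..n}}" by (rule finite_permutations) simp
qed

lemma AL_sub: "AL n s \<subseteq> {0..n}" unfolding AL_def by auto

lemma ia_ins: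
  assumes S: "s permutes {1..n}" and a: "a \<in> {0..n}"
  shows "ia n (ins n s a) = a"
proof (cases "a = 0")
  case True
  thus ?thesis unfolding ia_def using perm_fix_Suc[OF S] by (simp add: ins0)
next
  case False
  have "a \<noteq> Suc n" using a by simp
  hence ne: "ins n s a (Suc n) \<noteq> Suc n" using ins_Suc_iff[OF S a, of "Suc n"] False by simp
  have "ins n s a a = Suc n" using ins_Suc_iff[OF S a, of a] False by simp
  hence "inv (ins n s a) (Suc n) = a"
    using permutes_inverses(2)[OF ins_permutes[OF S a], of a] by simp
  thus ?thesis unfolding ia_def using ne by simp
qed

lemma reindex:
  "(\<Sum>p\<in>simsun2 (Suc n). f p) = (\<Sum>s\<in>simsun2 n. \<Sum>a\<in>AL n s. f (ins n s a))"
proof -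
  have "(\<Sum>s\<in>simsun2 n. \<Sum>a\<in>AL n s. f (ins n s a)) = (\<Sum>x\<in>Sigma (simsun2 n) (AL n). f (ins n (fst x) (snd x)))"
    by (subst sum.Sigma) (auto simp: finite_simsun2 AL_def split_beta)
  also have "\<dots> = (\<Sum>p\<in>simsun2 (Suc n). f p)"
  proof (rule sum.reindex_bij_witness[where i = "\<lambda>p. (rem n p, ia n p)" and j = "\<lambda>x. ins n (fst x) (snd x)"])
    fix x assume x: "x \<in> Sigma (simsun2 n) (AL n)"
    hence s2: "fst x \<in> simsun2 n" and al: "snd x \<in> AL n (fst x)" by (auto simp: mem_Sigma_iff)
    have S: "fst x permutes {1..n}" by (rule simsun2_perm[OF s2])
    have a: "snd x \<in> {0..n}" using AL_sub al by blast
    show "(rem n (ins n (fst x) (snd x)), ia n (ins n (fst x) (snd x))) = x"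
      using rem_ins[OF S a] ia_ins[OF S a] by simp
    have "\<not> (snd x \<noteq> 0 \<and> inv_into {1..n} (fst x) (snd x) < snd x)" using al unfolding AL_def by auto
    hence "\<not> (\<exists>y. double_exc (Suc n) (ins n (fst x) (snd x)) y)"
      using dexc_ins[OF S a simsun2_nodexc[OF s2]] by simp
    thus "ins n (fst x) (snd x) \<in> simsun2 (Suc n)"
      unfolding simsun2_Suc using ins_permutes[OF S a] rem_ins[OF S a] s2 by simp
    show "f (ins n (fst x) (snd x)) = f (ins n (fst x) (snd x))" ..
  next
    fix p assume p: "p \<in> simsun2 (Suc n)"
    hence P: "p permutes {1..Suc n}" and R: "rem n p \<in> simsun2 n" and D: "\<not> (\<exists>y. double_exc (Suc n) p y)"
      unfolding simsun2_Suc by auto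
    have a: "ia n p \<in> {0..n}" and pe: "ins n (rem n p) (ia n p) = p"
      using ins_rem[OF P] unfolding ia_def by auto
    show "ins n (fst (rem n p, ia n p)) (snd (rem n p, ia n p)) = p" using pe by simp
    have "\<not> (ia n p \<noteq> 0 \<and> inv_into {1..n} (rem n p) (ia n p) < ia n p)"
      using dexc_ins[OF rem_permutes[OF P] a simsun2_nodexc[OF R]] pe D by simp
    hence "ia n p \<in> AL n (rem n p)" using a unfolding AL_def by auto
    thus "(rem n p, ia n p) \<in> Sigma (simsun2 n) (AL n)" using R by simp
  qed
  finally show ?thesis ..
qed



lemma inner_sum:
  fixes q :: real
  assumes s2: "s \<in> simsun2 n"
  defines "c \<equiv> complex_of_real (q ^ cyc n s)" and "e \<equiv> exc n s"
  shows "(\<Sum>a\<in>AL n s. W q (Suc n) (ins n s a)) =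
     monom (complex_of_real q * c) e + of_nat e * monom c e + of_nat (n - e - e) * monom c (Suc e)"
    and "e + e \<le> n"
proof -
  have S: "s permutes {1..n}" by (rule simsun2_perm[OF s2])
  have nd: "\<not> (\<exists>x. double_exc n s x)" by (rule simsun2_nodexc[OF s2])
  let ?G = "{a \<in> {1..n}. \<not> inv_into {1..n} s a < a}"
  let ?A = "{i \<in> {1..n}. i < s i}"
  let ?B = "{a \<in> {1..n}. inv_into {1..n} s a < a}"
  have AG: "?A \<subseteq> ?G"
  proof
    fix i assume i: "i \<in> ?A"
    have "\<not> double_exc n s i" using nd by blast
    thus "i \<in> ?G" using i unfolding double_exc_def by auto
  qed
  have cA: "card ?A = e" unfolding e_def exc_def ..
  have cB: "card ?B = e" unfolding e_def by (rule peaks_card[OF S])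
  have G: "?G = {1..n} - ?B" by auto
  have cG: "card ?G = n - e" unfolding G using cB by (subst card_Diff_subset) auto
  have cGA: "card (?G - ?A) = n - e - e" using cG cA AG by (subst card_Diff_subset) (auto intro: finite_subset)
  have "card ?A \<le> card ?G" using AG by (intro card_mono) auto
  thus "e + e \<le> n" using cA cG by simp
  have W0: "W q (Suc n) (ins n s 0) = monom (complex_of_real q * c) e"
    unfolding W_def c_def e_def using cyc_ins[OF S, of 0] exc_ins[OF S, of 0] by simp
  have WA: "W q (Suc n) (ins n s a) = monom c e" if "a \<in> ?A" for a
  proof -
    have a: "a \<in> {0..n}" "a \<noteq> 0" using that by auto
    show ?thesis unfolding W_def c_def e_def using cyc_ins[OF S a(1)] exc_ins[OF S a(1)] a(2) that by simp
  qed
  have WB: "W q (Suc n) (ins n s a) = monom c (Suc e)" if "a \<in> ?G - ?A" for a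
  proof -
    have a: "a \<in> {0..n}" "a \<noteq> 0" "\<not> a < s a" using that by auto
    show ?thesis unfolding W_def c_def e_def using cyc_ins[OF S a(1)] exc_ins[OF S a(1)] a(2,3) by simp
  qed
  have fG: "finite ?G" by simp
  have "(\<Sum>a\<in>AL n s. W q (Suc n) (ins n s a)) = W q (Suc n) (ins n s 0) + (\<Sum>a\<in>?G. W q (Suc n) (ins n s a))"
    unfolding AL_def by (subst sum.insert) auto
  also have "(\<Sum>a\<in>?G. W q (Suc n) (ins n s a)) = (\<Sum>a\<in>?G - ?A. W q (Suc n) (ins n s a)) + (\<Sum>a\<in>?A. W q (Suc n) (ins n s a))"
    by (rule sum.subset_diff[OF AG fG])
  also have "(\<Sum>a\<in>?A. W q (Suc n) (ins n s a)) = (\<Sum>a\<in>?A. monom c e)" by (rule sum.cong) (use WA in auto)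
  also have "\<dots> = of_nat e * monom c e" using cA by simp
  also have "(\<Sum>a\<in>?G - ?A. W q (Suc n) (ins n s a)) = (\<Sum>a\<in>?G - ?A. monom c (Suc e))" by (rule sum.cong) (use WB in auto)
  also have "\<dots> = of_nat (n - e - e) * monom c (Suc e)" using cGA by simp
  finally show "(\<Sum>a\<in>AL n s. W q (Suc n) (ins n s a)) =
     monom (complex_of_real q * c) e + of_nat e * monom c e + of_nat (n - e - e) * monom c (Suc e)"
    using W0 by (simp add: algebra_simps)
qed

lemma term_identity:
  fixes c qq :: complex
  assumes "e + e \<le> n"
  shows "monom (qq * c) e + of_nat e * monom c e + of_nat (n - e - e) * monom c (Suc e) =
         [:qq, of_nat n:] * monom c e + [:0, 1, -2:] * pderiv (monom c e)"
proof -
  have "poly (monom (qq * c) e + of_nat e * monom c e + of_nat (n - e - e) * monom c (Suc e)) x =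
        poly ([:qq, of_nat n:] * monom c e + [:0, 1, -2:] * pderiv (monom c e)) x" for x
  proof (cases e)
    case 0
    have "of_nat (n - e - e) = (of_nat n :: complex)" using 0 by simp
    thus ?thesis using 0 by (simp add: poly_monom pderiv_monom algebra_simps)
  next
    case (Suc k)
    define m where "m = n - e - e"
    have nm: "(of_nat n :: complex) = of_nat m + 2 * of_nat e" using assms unfolding m_def
      by (metis add.commute diff_add_inverse2 diff_diff_left le_add_diff_inverse mult_2 of_nat_add)
    show ?thesis unfolding nm m_def[symmetric] using Suc by (simp add: poly_monom pderiv_monom algebra_simps)
  qed
  hence "poly (monom (qq * c) e + of_nat e * monom c e + of_nat (n - e - e) * monom c (Suc e)) =
        poly ([:qq, of_nat n:] * monom c e + [:0, 1, -2:] * pderiv (monom c e))" by (rule ext)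
  thus ?thesis by (simp only: poly_eq_poly_eq_iff)
qed

lemma pderiv_sum': "pderiv (\<Sum>x\<in>A. f x) = (\<Sum>x\<in>A. pderiv (f x))"
  by (induction A rule: infinite_finite_induct) (simp_all add: pderiv_add)

theorem S_poly_rec:
  "S_poly (Suc n) q = [:complex_of_real q, of_nat n:] * S_poly n q + [:0, 1, -2:] * pderiv (S_poly n q)"
proof -
  have "S_poly (Suc n) q = (\<Sum>s\<in>simsun2 n. \<Sum>a\<in>AL n s. W q (Suc n) (ins n s a))"
    unfolding S_poly_W by (rule reindex)
  also have "\<dots> = (\<Sum>s\<in>simsun2 n. [:complex_of_real q, of_nat n:] * W q n s + [:0, 1, -2:] * pderiv (W q n s))"
  proof (rule sum.cong)
    fix s assume s: "s \<in> simsun2 n"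
    show "(\<Sum>a\<in>AL n s. W q (Suc n) (ins n s a)) = [:complex_of_real q, of_nat n:] * W q n s + [:0, 1, -2:] * pderiv (W q n s)"
      by (subst inner_sum(1)[OF s], unfold W_def, rule term_identity[OF inner_sum(2)[OF s]])
  qed simp
  also have "\<dots> = [:complex_of_real q, of_nat n:] * S_poly n q + [:0, 1, -2:] * pderiv (S_poly n q)"
    unfolding S_poly_W pderiv_sum' by (simp add: sum.distrib sum_distrib_left)
  finally show ?thesis .
qed



definition LP :: "(nat \<Rightarrow> real) \<Rightarrow> nat \<Rightarrow> real poly" where
  "LP r d = (\<Prod>j<d. [:- r j, 1:])"

lemma LP_poly: "poly (LP r d) x = (\<Prod>j<d. x - r j)"
  unfolding LP_def poly_prod by simp

lemma LP_deg: "degree (LP r d) = d"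
  unfolding LP_def by (subst degree_prod_eq_sum_degree) auto

lemma LP_lead: "lead_coeff (LP r d) = 1"
  unfolding LP_def lead_coeff_prod by simp

lemma LP_nz: "LP r d \<noteq> 0"
  using LP_lead[of r d] by auto

lemma LP_Suc: "LP r (Suc d) = LP r d * [:- r d, 1:]"
  unfolding LP_def by (rule prod.lessThan_Suc)

lemma LP_Suc_shift: "LP r (Suc d) = [:- r 0, 1:] * LP (\<lambda>k. r (Suc k)) d"
  unfolding LP_def by (rule prod.lessThan_Suc_shift)

lemma pderiv_linear_prod:
  fixes r :: "nat \<Rightarrow> real"
  assumes "finite I" "j \<in> I"
  shows "poly (pderiv (\<Prod>i\<in>I. [:- r i, 1:])) (r j) = (\<Prod>i\<in>I - {j}. r j - r i)"
proof -
  have eq: "(\<Prod>i\<in>I. [:- r i, 1:]) = [:- r j, 1:] * (\<Prod>i\<in>I - {j}. [:- r i, 1:])"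
    using assms by (rule prod.remove)
  have "pderiv (\<Prod>i\<in>I. [:- r i, 1:]) = [:- r j, 1:] * pderiv (\<Prod>i\<in>I - {j}. [:- r i, 1:]) + (\<Prod>i\<in>I - {j}. [:- r i, 1:]) * pderiv [:- r j, 1:]"
    unfolding eq by (rule pderiv_mult)
  moreover have "pderiv [:- r j, 1:] = 1" by (simp add: pderiv_pCons)
  ultimately have "poly (pderiv (\<Prod>i\<in>I. [:- r i, 1:])) (r j) =
     poly [:- r j, 1:] (r j) * poly (pderiv (\<Prod>i\<in>I - {j}. [:- r i, 1:])) (r j) + poly (\<Prod>i\<in>I - {j}. [:- r i, 1:]) (r j)"
    by (simp only: poly_mult poly_add poly_1 mult_1_right)
  moreover have "poly [:- r j, 1:] (r j) = 0" by simp
  ultimately show ?thesis by (simp add: poly_prod)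
qed

lemma prod_neg_sign:
  fixes a :: "nat \<Rightarrow> real"
  assumes "\<forall>k<d. a k < 0"
  shows "(-1) ^ d * (\<Prod>k<d. a k) > 0"
  using assms
proof (induction d)
  case (Suc d)
  have "(-1) ^ Suc d * (\<Prod>k<Suc d. a k) = ((-1) ^ d * (\<Prod>k<d. a k)) * (- a d)" by simp
  moreover have "(-1) ^ d * (\<Prod>k<d. a k) > 0" using Suc by simp
  moreover have "- a d > 0" using Suc.prems by simp
  ultimately show ?case by (metis mult_pos_pos)
qed simp

definition sincr :: "(nat \<Rightarrow> real) \<Rightarrow> nat \<Rightarrow> bool" where
  "sincr r d \<longleftrightarrow> (\<forall>i j. i < j \<longrightarrow> j < d \<longrightarrow> r i < r j)"

lemma sincrI:
  assumes "\<And>k. Suc k < d \<Longrightarrow> f k < f (Suc k)"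
  shows "sincr f d"
  unfolding sincr_def
proof (intro allI impI)
  fix i j assume "i < j" "j < d"
  thus "f i < f j"
  proof (induction j)
    case (Suc j)
    show ?case
    proof (cases "i = j")
      case True thus ?thesis using assms Suc.prems by simp
    next
      case False
      hence "f i < f j" using Suc by simp
      also have "f j < f (Suc j)" using assms Suc.prems by simp
      finally show ?thesis .
    qed
  qed simp
qed

lemma pderiv_sign:
  assumes inc: "sincr r d" and j: "j < d"
  shows "(-1) ^ (d - 1 - j) * (\<Prod>i\<in>{..<d} - {j}. r j - r i) > 0"
proof -
  have split: "{..<d} - {j} = {..<j} \<union> {Suc j..<d}" using j by auto
  have disj: "{..<j} \<inter> {Suc j..<d} = {}" by auto
  have "(\<Prod>i\<in>{..<d} - {j}. r j - r i) = (\<Prod>i\<in>{..<j}. r j - r i) * (\<Prod>i\<in>{Suc j..<d}. r j - r i)"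
    unfolding split by (rule prod.union_disjoint) (auto simp: disj)
  moreover have "(\<Prod>i\<in>{..<j}. r j - r i) > 0"
    using inc j unfolding sincr_def by (intro prod_pos) auto
  moreover have "(-1) ^ (d - 1 - j) * (\<Prod>i\<in>{Suc j..<d}. r j - r i) > 0"
  proof -
    have "(\<Prod>i\<in>{Suc j..<d}. r j - r i) = (\<Prod>k<d - 1 - j. r j - r (k + Suc j))"
    proof -
      have "{Suc j..<d} = (\<lambda>k. k + Suc j) ` {..<d - 1 - j}"
      proof (intro set_eqI iffI)
        fix x assume "x \<in> {Suc j..<d}"
        thus "x \<in> (\<lambda>k. k + Suc j) ` {..<d - 1 - j}" by (intro image_eqI[of _ _ "x - Suc j"]) auto
      qed auto
      moreover have "inj_on (\<lambda>k. k + Suc j) {..<d - 1 - j}" by (auto simp: inj_on_def)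
      ultimately show ?thesis by (simp add: prod.reindex)
    qed
    moreover have "\<forall>k<d - 1 - j. r j - r (k + Suc j) < 0"
      using inc unfolding sincr_def by auto
    ultimately show ?thesis using prod_neg_sign[of "d - 1 - j" "\<lambda>k. r j - r (k + Suc j)"] by simp
  qed
  ultimately show ?thesis by (metis mult.left_commute mult_pos_pos)
qed

lemma divide_roots:
  assumes inc: "sincr t m" and roots: "\<forall>k<m. poly Q (t k) = 0"
  shows "\<exists>g. Q = LP t m * g"
  using assms
proof (induction m)
  case 0 thus ?case by (simp add: LP_def)
next
  case (Suc m)
  have "sincr t m" using Suc.prems(1) unfolding sincr_def by auto
  then obtain g where g: "Q = LP t m * g" using Suc by auto
  have "poly Q (t m) = 0" using Suc.prems(2) by simp
  hence "poly (LP t m) (t m) * poly g (t m) = 0" using g by simp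
  moreover have "poly (LP t m) (t m) \<noteq> 0"
  proof -
    have "\<forall>j<m. t m - t j \<noteq> 0" using Suc.prems(1) unfolding sincr_def by fastforce
    thus ?thesis unfolding LP_poly by (simp add: prod_zero_iff)
  qed
  ultimately have "poly g (t m) = 0" by simp
  then obtain g' where "g = [:- t m, 1:] * g'" using poly_eq_0_iff_dvd by (metis dvdE)
  hence "Q = LP t (Suc m) * g'" using g by (simp only: LP_Suc mult.assoc)
  thus ?case by blast
qed



fun R :: "real \<Rightarrow> nat \<Rightarrow> real poly" where
  "R q 0 = 1"
| "R q (Suc n) = [:q, of_nat n:] * R q n + [:0, 1, -2:] * pderiv (R q n)"

lemma R_coeff:
  "coeff (R q (Suc n)) (Suc k) = (q + of_nat (Suc k)) * coeff (R q n) (Suc k) + (of_nat n - 2 * of_nat k) * coeff (R q n) k"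
  by (cases k) (simp_all add: coeff_pderiv algebra_simps)

lemma R_poly:
  "poly (R q (Suc n)) x = (q + of_nat n * x) * poly (R q n) x + (x - 2 * x^2) * poly (pderiv (R q n)) x"
  by (simp add: algebra_simps power2_eq_square)

lemma sign_flip:
  fixes A B s :: real
  assumes "A * (- s) > 0" "B * s > 0"
  shows "A * B < 0"
proof -
  have "(A * (- s)) * (B * s) > 0" using assms by (rule mult_pos_pos)
  hence "- (A * B) * (s * s) > 0" by (simp add: algebra_simps)
  moreover have "s * s \<ge> 0" by simp
  ultimately show ?thesis by (simp add: mult_less_0_iff)
qed

lemma R_step:
  assumes q: "q > 0" and c: "c > 0" and inc: "sincr r d" and neg: "\<forall>j<d. r j < 0"
    and P: "R q n = smult c (LP r d)" and d: "d = n div 2"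
  shows "\<exists>c' r'. c' > 0 \<and> sincr r' (Suc n div 2) \<and> (\<forall>j<Suc n div 2. r' j < 0) \<and>
           R q (Suc n) = smult c' (LP r' (Suc n div 2))"
proof -
  define Q where "Q = R q (Suc n)"
  have PQr: "poly Q (r j) * (-1) ^ (d - j) > 0" if j: "j < d" for j
  proof -
    have "poly (R q n) (r j) = 0" unfolding P using j by (auto simp: LP_poly prod_zero_iff)
    moreover have "poly (pderiv (R q n)) (r j) = c * (\<Prod>i\<in>{..<d} - {j}. r j - r i)"
      unfolding P pderiv_smult LP_def using pderiv_linear_prod[of "{..<d}" j r] j by simp
    ultimately have hx: "poly Q (r j) = (r j - 2 * (r j)^2) * c * (\<Prod>i\<in>{..<d} - {j}. r j - r i)"
      unfolding Q_def R_poly by simp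
    have he: "(-1::real) ^ (d - j) = - ((-1) ^ (d - 1 - j))"
    proof -
      have "d - j = Suc (d - 1 - j)" using j by simp
      thus ?thesis by simp
    qed
    have "poly Q (r j) * (-1) ^ (d - j) = ((r j - 2 * (r j)^2) * c * (\<Prod>i\<in>{..<d} - {j}. r j - r i)) * (- ((-1) ^ (d - 1 - j)))"
      by (simp only: hx he)
    also have "\<dots> = (- r j + 2 * (r j)^2) * c * ((-1) ^ (d - 1 - j) * (\<Prod>i\<in>{..<d} - {j}. r j - r i))"
      by (simp add: algebra_simps)
    finally have "poly Q (r j) * (-1) ^ (d - j) = (- r j + 2 * (r j)^2) * c * ((-1) ^ (d - 1 - j) * (\<Prod>i\<in>{..<d} - {j}. r j - r i))" .
    moreover have "- r j + 2 * (r j)^2 > 0"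
    proof -
      have "- r j > 0" using neg j by simp
      moreover have "2 * (r j)^2 \<ge> 0" by simp
      ultimately show ?thesis by linarith
    qed
    moreover have "(-1) ^ (d - 1 - j) * (\<Prod>i\<in>{..<d} - {j}. r j - r i) > 0" by (rule pderiv_sign[OF inc j])
    ultimately show ?thesis using c by simp
  qed
  have P0: "poly (R q n) 0 > 0"
  proof -
    have "(\<Prod>j<d. 0 - r j) > 0" using neg by (intro prod_pos) auto
    thus ?thesis unfolding P using c by (simp add: LP_poly)
  qed
  have Q0: "poly Q 0 > 0" unfolding Q_def R_poly using P0 q by simp
  define z where "z k = (if k < d then r k else 0)" for k
  have zs: "poly Q (z k) * (-1) ^ (d - k) > 0" if "k \<le> d" for k
  proof (cases "k < d")
    case True thus ?thesis using PQr unfolding z_def by simp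
  next
    case False hence "k = d" using that by simp
    thus ?thesis using Q0 unfolding z_def by simp
  qed
  have zinc: "z k < z (Suc k)" if "k < d" for k
  proof (cases "Suc k < d")
    case True thus ?thesis using inc unfolding z_def sincr_def by simp
  next
    case False thus ?thesis using neg that unfolding z_def by simp
  qed
  have zle0: "z k \<le> 0" for k using neg unfolding z_def by (simp add: less_imp_le)
  have ex: "\<forall>k. \<exists>t. k < d \<longrightarrow> z k < t \<and> t < z (Suc k) \<and> poly Q t = 0"
  proof
    fix k show "\<exists>t. k < d \<longrightarrow> z k < t \<and> t < z (Suc k) \<and> poly Q t = 0"
    proof (cases "k < d")
      case True
      have "(-1::real) ^ (d - k) = - ((-1) ^ (d - Suc k))"
      proof -
        have "d - k = Suc (d - Suc k)" using True by simp
        thus ?thesis by simp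
      qed
      hence "poly Q (z k) * (- ((-1) ^ (d - Suc k))) > 0" using zs[of k] True by simp
      moreover have "poly Q (z (Suc k)) * (-1) ^ (d - Suc k) > 0" using zs[of "Suc k"] True by simp
      ultimately have "poly Q (z k) * poly Q (z (Suc k)) < 0" by (rule sign_flip)
      from poly_IVT[OF zinc[OF True] this] show ?thesis by blast
    qed simp
  qed
  from choice[OF ex] obtain t where t: "\<And>k. k < d \<Longrightarrow> z k < t k \<and> t k < z (Suc k) \<and> poly Q (t k) = 0"
    by blast
  have tinc: "sincr t d"
  proof (rule sincrI)
    fix k assume "Suc k < d"
    thus "t k < t (Suc k)" using t[of k] t[of "Suc k"] by simp
  qed
  have tneg: "\<forall>k<d. t k < 0" using t zle0 by (meson less_le_trans)
  have zmono: "z 0 \<le> z k" if "k < d" for k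
  proof (cases k)
    case (Suc k') thus ?thesis using inc that unfolding z_def sincr_def by (simp add: less_imp_le)
  qed simp
  have tgt: "\<forall>k<d. z 0 < t k" using t zmono by (meson le_less_trans)
  obtain g where g: "Q = LP t d * g" using divide_roots[OF tinc] t by blast
  have cP: "coeff (R q n) k = 0" if "k > d" for k
    unfolding P using LP_deg[of r d] that by (simp add: coeff_eq_0)
  have cPd: "coeff (R q n) d = c" unfolding P using LP_lead[of r d] LP_deg[of r d] by simp
  have cQ: "coeff Q (Suc k) = 0" if "k > d" for k
    unfolding Q_def R_coeff using cP[of k] cP[of "Suc k"] that by simp
  have cQd: "coeff Q (Suc d) = (of_nat n - 2 * of_nat d) * c"
    unfolding Q_def R_coeff using cP[of "Suc d"] cPd by simp
  have Qnz: "Q \<noteq> 0" using Q0 by auto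
  hence gnz: "g \<noteq> 0" using g by auto
  have degQ: "degree Q = d + degree g" using g LP_nz LP_deg gnz by (simp add: degree_mult_eq)
  have LPt0: "poly (LP t d) 0 > 0"
  proof -
    have "(\<Prod>j<d. 0 - t j) > 0" using tneg by (intro prod_pos) auto
    thus ?thesis unfolding LP_poly by simp
  qed
  show ?thesis
  proof (cases "even n")
    case True
    hence sd: "Suc n div 2 = d" using d by simp
    obtain k0 where k0: "n = 2 * k0" using True by (rule evenE)
    hence "d = k0" using d by simp
    hence "of_nat n - 2 * of_nat d = (0::real)" using k0 by simp
    hence cQd0: "coeff Q (Suc d) = 0" using cQd by simp
    have "degree Q \<le> d"
    proof (rule degree_le, intro allI impI)
      fix i assume "d < i"
      then obtain k where k1: "i = Suc k" by (cases i) auto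
      hence k: "i = Suc k" "k \<ge> d" using \<open>d < i\<close> by simp_all
      show "coeff Q i = 0"
      proof (cases "k = d")
        case True thus ?thesis using k cQd0 by simp
      next
        case False thus ?thesis using k cQ by simp
      qed
    qed
    hence "degree g = 0" using degQ by simp
    then obtain g0 where g0: "g = [:g0:]" by (rule degree_eq_zeroE)
    have "poly Q 0 = poly (LP t d) 0 * g0" using g g0 by simp
    hence "g0 > 0" using Q0 LPt0 by (simp add: zero_less_mult_iff)
    moreover have "Q = smult g0 (LP t d)" using g g0 by simp
    ultimately show ?thesis unfolding sd Q_def using tinc tneg by blast
  next
    case False
    hence sd: "Suc n div 2 = Suc d" using d by (simp add: odd_Suc_div_two)
    obtain k0 where k0: "n = 2 * k0 + 1" using False by (rule oddE)
    hence "d = k0" using d by simp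
    hence "of_nat n - 2 * of_nat d = (1::real)" using k0 by simp
    hence cQd1: "coeff Q (Suc d) = c" using cQd by simp
    have "degree Q \<le> Suc d"
    proof (rule degree_le, intro allI impI)
      fix i assume "Suc d < i"
      then obtain k where k1: "i = Suc k" by (cases i) auto
      hence k: "i = Suc k" "k > d" using \<open>Suc d < i\<close> by simp_all
      show "coeff Q i = 0" using k cQ by simp
    qed
    moreover have "Suc d \<le> degree Q" using cQd1 c by (intro le_degree) simp
    ultimately have dQ: "degree Q = Suc d" by simp
    hence dg: "degree g = 1" using degQ by simp
    have "lead_coeff Q = c" using dQ cQd1 by simp
    hence lg: "lead_coeff g = c" using g LP_lead[of t d] by (simp add: lead_coeff_mult)
    define g0 where "g0 = coeff g 0"
    have gform: "g = [:g0, c:]"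
    proof (rule poly_eqI)
      fix k show "coeff g k = coeff [:g0, c:] k"
      proof (cases k)
        case 0 thus ?thesis unfolding g0_def by simp
      next
        case (Suc k')
        show ?thesis
        proof (cases k')
          case 0 thus ?thesis using Suc lg dg by simp
        next
          case (Suc k'') thus ?thesis using \<open>k = Suc k'\<close> dg by (simp add: coeff_eq_0)
        qed
      qed
    qed
    have sgnLP: "(-1) ^ d * poly (LP t d) (z 0) > 0"
      unfolding LP_poly by (rule prod_neg_sign) (use tgt in auto)
    have "poly Q (z 0) * (-1) ^ d > 0" using zs[of 0] by simp
    hence "((-1) ^ d * poly (LP t d) (z 0)) * (g0 + c * z 0) > 0" using g gform by (simp add: algebra_simps)
    hence pos: "g0 + c * z 0 > 0" using sgnLP by (simp add: zero_less_mult_iff)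
    define u where "u = - g0 / c"
    have uz: "u < z 0" unfolding u_def using pos c by (simp add: field_simps)
    define r' where "r' k = (if k = 0 then u else t (k - 1))" for k
    have LPr': "LP r' (Suc d) = [:- u, 1:] * LP t d"
      unfolding LP_Suc_shift by (simp add: r'_def)
    have gs: "g = smult c [:- u, 1:]" unfolding gform u_def using c by simp
    have cm: "LP t d * [:- u, 1:] = [:- u, 1:] * LP t d" by (rule mult.commute)
    have QQ: "Q = smult c (LP r' (Suc d))" unfolding LPr' using g gs cm by (simp only: mult_smult_right)
    have r'inc: "sincr r' (Suc d)"
    proof (rule sincrI)
      fix k assume k: "Suc k < Suc d"
      show "r' k < r' (Suc k)"
      proof (cases k)
        case 0
        hence "0 < d" using k by simp
        hence "z 0 < t 0" using tgt by simp
        hence "u < t 0" using uz by simp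
        thus ?thesis using 0 unfolding r'_def by simp
      next
        case (Suc k') thus ?thesis using tinc k unfolding r'_def sincr_def by simp
      qed
    qed
    have r'neg: "\<forall>j<Suc d. r' j < 0"
    proof (intro allI impI)
      fix j assume "j < Suc d"
      show "r' j < 0"
      proof (cases j)
        case 0 thus ?thesis using uz zle0[of 0] unfolding r'_def by simp
      next
        case (Suc j') thus ?thesis using tneg \<open>j < Suc d\<close> unfolding r'_def by simp
      qed
    qed
    show ?thesis unfolding sd using QQ r'inc r'neg c unfolding Q_def by blast
  qed
qed



lemma simsun2_0: "simsun2 0 = {id}"
proof -
  have "id \<in> simsun2 0" unfolding simsun2_def double_exc_def by simp
  moreover have "p = id" if "p \<in> simsun2 0" for p using simsun2_perm[OF that] by simp
  ultimately show ?thesis by blast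
qed

lemma S_poly_0: "S_poly 0 q = 1"
  unfolding S_poly_def simsun2_0 cyc_def exc_def by simp

abbreviation M :: "real poly \<Rightarrow> complex poly" where "M \<equiv> map_poly complex_of_real"

lemma M_add: "M (p + q) = M p + M q"
  by (intro poly_eqI) (simp add: coeff_map_poly)

lemma M_smult: "M (smult a p) = smult (complex_of_real a) (M p)"
  by (rule map_poly_smult) simp_all

lemma M_pCons: "M (pCons a p) = pCons (complex_of_real a) (M p)"
  by (rule map_poly_pCons) simp

lemma M_mult: "M (p * q) = M p * M q"
  by (induction p) (simp_all add: M_add M_smult M_pCons)

lemma M_pderiv: "M (pderiv p) = pderiv (M p)"
  by (intro poly_eqI) (simp add: coeff_map_poly coeff_pderiv)

lemma M_1: "M 1 = 1" by simp

lemma M_prod: "M (\<Prod>j\<in>A. f j) = (\<Prod>j\<in>A. M (f j))"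
  by (induction A rule: infinite_finite_induct) (simp_all add: M_mult)

lemma S_poly_R: "S_poly n q = M (R q n)"
proof (induction n)
  case 0 thus ?case by (simp add: S_poly_0)
next
  case (Suc n)
  show ?case unfolding S_poly_rec Suc R.simps M_add M_mult M_pderiv by (simp add: M_pCons)
qed

lemma R_inv:
  assumes q: "q > 0" and n: "n \<ge> 1"
  shows "\<exists>c r. c > 0 \<and> sincr r (n div 2) \<and> (\<forall>j<n div 2. r j < 0) \<and> R q n = smult c (LP r (n div 2))"
  using n
proof (induction n rule: dec_induct)
  case base
  have "R q 1 = smult q (LP (\<lambda>_. 0) 0)" by (simp add: LP_def)
  thus ?case using q unfolding sincr_def by fastforce
next
  case (step n)
  then obtain c r where "c > 0" "sincr r (n div 2)" "\<forall>j<n div 2. r j < 0" "R q n = smult c (LP r (n div 2))"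
    by blast
  from R_step[OF q this refl] show ?case .
qed

theorem corollary14:
  fixes q :: real and n :: nat
  assumes "q > 0" and "n \<ge> 2"
  shows "\<forall>z. poly (S_poly n q) z = 0 \<longrightarrow>
           Im z = 0 \<and> Re z \<le> 0 \<and> order z (S_poly n q) = 1"
proof (intro allI impI)
  fix z assume z: "poly (S_poly n q) z = 0"
  define d where "d = n div 2"
  obtain c r where c: "c > 0" and inc: "sincr r d" and neg: "\<forall>j<d. r j < 0"
    and Rf: "R q n = smult c (LP r d)"
  proof -
    have "n \<ge> 1" using assms(2) by simp
    from R_inv[OF assms(1) this] show ?thesis using that unfolding d_def by blast
  qed
  define \<rho> where "\<rho> j = complex_of_real (r j)" for j
  have Sf: "S_poly n q = smult (complex_of_real c) (\<Prod>j<d. [:- \<rho> j, 1:])"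
    unfolding S_poly_R Rf M_smult LP_def M_prod \<rho>_def by (simp add: M_pCons)
  have "(\<Prod>j<d. z - \<rho> j) = 0" using z c unfolding Sf by (simp add: poly_prod)
  then obtain j where j: "j < d" "z = \<rho> j" by (auto simp: prod_zero_iff)
  have zr: "z = complex_of_real (r j)" using j unfolding \<rho>_def by simp
  show "Im z = 0 \<and> Re z \<le> 0 \<and> order z (S_poly n q) = 1"
  proof (intro conjI)
    show "Im z = 0" using zr by simp
    have "r j < 0" using neg j(1) by simp
    thus "Re z \<le> 0" using zr by simp
    have fin: "finite {..<d}" by simp
    have split: "(\<Prod>i<d. [:- \<rho> i, 1:]) = [:- \<rho> j, 1:] * (\<Prod>i\<in>{..<d} - {j}. [:- \<rho> i, 1:])"
      using j(1) by (intro prod.remove) auto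
    define Pr where "Pr = (\<Prod>i\<in>{..<d} - {j}. [:- \<rho> i, 1:])"
    have Prz: "poly Pr z \<noteq> 0"
    proof -
      have "\<forall>i\<in>{..<d} - {j}. z - \<rho> i \<noteq> 0"
      proof
        fix i assume i: "i \<in> {..<d} - {j}"
        have "r i \<noteq> r j"
        proof (cases "i < j")
          case True thus ?thesis using inc j(1) unfolding sincr_def by force
        next
          case False hence "j < i" using i by auto
          thus ?thesis using inc i unfolding sincr_def by force
        qed
        thus "z - \<rho> i \<noteq> 0" using zr unfolding \<rho>_def by simp
      qed
      thus ?thesis unfolding Pr_def poly_prod by (simp add: prod_zero_iff)
    qed
    hence Prnz: "Pr \<noteq> 0" by auto
    have lnz: "[:- z, 1:] \<noteq> 0" by simp
    have "order z (S_poly n q) = order z ([:- z, 1:] * Pr)"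
      unfolding Sf split Pr_def[symmetric] using c j(2) by (simp add: order_smult)
    also have "\<dots> = order z [:- z, 1:] + order z Pr"
      using lnz Prnz by (intro order_mult) (metis mult_eq_0_iff)
    also have "order z [:- z, 1:] = 1" using order_power_n_n[of z 1] by simp
    also have "order z Pr = 0" using Prz by (rule order_0I)
    finally show "order z (S_poly n q) = 1" by simp
  qed
qed

end
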